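(* Let $k\ge1$ and $n\ge k$ be integers, $m\ge2$ an even integer, and $\mathbf{a}=(a_1,\dots,a_k)\in\mathbb{R}^k$. Then for all $x$, \[ m^{k-n}\left(-\frac12\right)^{k}\frac{n!}{(n-k)!}\Big(\prod_{i=1}^{k}a_i\Big)E_{n-k}^{(k)}(mx\mid\mathbf{a})=\sum_{l_1,\dots,l_k=0}^{m-1}(-1)^{l_1+\dots+l_k}B_n^{(k)}\Big(x+\frac1m\sum_{i=1}^{k}a_il_i\,\Big|\,\mathbf{a}\Big). \]
   Context: The Nörlund polynomials are defined by $\sum_{n\ge0}B_n^{(k)}(x\mid\mathbf{a})\frac{t^n}{n!}=e^{xt}\prod_{j=1}^{k}\frac{a_jt}{e^{a_jt}-1}$, and the higher-order Euler polynomials with parameters by $\sum_{n\ge0}E_n^{(k)}(x\mid\mathbf{a})\frac{t^n}{n!}=e^{xt}\prod_{j=1}^{k}\frac{2}{e^{a_jt}+1}$ (the paper writes $E^{(k)}_{n-k}(mx)$, meaning these polynomials with the same parameter vector $\mathbf{a}$). *)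

theory Defs
  imports "HOL-Computational_Algebra.Formal_Power_Series"
begin

(* Bernoulli-type factor  a t / (e^{a t} - 1)  as a formal power series in t.
   For a = 0 the factor is the removable-singularity value 1. *)
definition bern_factor :: "real \<Rightarrow> real fps" where
  "bern_factor a = (if a = 0 then 1 else (fps_const a * fps_X) / (fps_exp a - 1))"

definition euler_factor :: "real \<Rightarrow> real fps" where
  "euler_factor a = fps_const 2 / (fps_exp a + 1)"

definition norlund :: "nat \<Rightarrow> nat \<Rightarrow> (nat \<Rightarrow> real) \<Rightarrow> real \<Rightarrow> real" where
  "norlund n k a x =
     fact n * fps_nth (fps_exp x * (\<Prod>j\<in>{1..k}. bern_factor (a j))) n"

definition euler_poly :: "nat \<Rightarrow> nat \<Rightarrow> (nat \<Rightarrow> real) \<Rightarrow> real \<Rightarrow> real" where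
  "euler_poly n k a x =
     fact n * fps_nth (fps_exp x * (\<Prod>j\<in>{1..k}. euler_factor (a j))) n"

end

theory Submission imports Defs "HOL-Library.FuncSet" 
begin
unbundle fps_syntax
definition S :: "real \<Rightarrow> real fps \<Rightarrow> real fps" where
  "S c f = Abs_fps (\<lambda>j. c^j * f $ j)"
lemma S_nth[simp]: "S c f $ j = c^j * f $ j" by (simp add: S_def)
lemma S_mult: "S c (f*g) = S c f * S c g"
proof (rule fps_ext)
  fix n
  have "S c (f*g) $ n = (\<Sum>i=0..n. c^i * f $ i * (c^(n-i) * g $ (n-i)))"
    by (simp add: fps_mult_nth sum_distrib_left)
       (rule sum.cong, auto simp: power_add[symmetric] algebra_simps)
  then show "S c (f*g) $ n = (S c f * S c g) $ n" by (simp add: fps_mult_nth mult.assoc)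
qed
lemma S_add: "S c (f+g) = S c f + S c g" by (rule fps_ext) (simp add: algebra_simps)
lemma S_one: "S c 1 = 1" by (rule fps_ext) simp
lemma S_const: "S c (fps_const r) = fps_const r" by (rule fps_ext) simp
lemma S_exp: "S c (fps_exp a) = fps_exp (c*a)" by (rule fps_ext) (simp add: power_mult_distrib)
lemma S_inverse: assumes "f $ 0 \<noteq> 0" shows "S c (inverse f) = inverse (S c f)"
proof -
  have "S c f * S c (inverse f) = 1" using assms
    by (simp add: S_mult[symmetric] inverse_mult_eq_1' S_one)
  then show ?thesis by (simp add: fps_inverse_unique)
qed
lemma S_prod: "S c (\<Prod>i\<in>A. f i) = (\<Prod>i\<in>A. S c (f i))"
  by (induction A rule: infinite_finite_induct) (auto simp: S_one S_mult)
lemma euler_factor_alt: "euler_factor b = fps_const 2 * inverse (fps_exp b + 1)"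
  unfolding euler_factor_def by (rule fps_divide_unit) simp
lemma S_euler: "S c (euler_factor b) = euler_factor (c*b)"
  by (simp add: euler_factor_alt S_mult S_const S_inverse S_add S_exp S_one)
lemma exp_sum: "fps_exp (\<Sum>i\<in>A. f i) = (\<Prod>i\<in>A. fps_exp (f i :: real))"
  by (induction A rule: infinite_finite_induct) (auto simp: fps_exp_add_mult)

lemma fps_const_prod: "fps_const (\<Prod>i\<in>A. f i) = (\<Prod>i\<in>A. fps_const (f i :: real))"
  by (induction A rule: infinite_finite_induct) (auto simp: fps_const_mult[symmetric])

lemma bern_mult: "(fps_exp b - 1) * bern_factor b = fps_const b * fps_X"
proof (cases "b = 0")
  case True then show ?thesis by (simp add: bern_factor_def)
next
  case False
  have d1: "subdegree (fps_exp b - 1) = 1"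
    by (rule subdegreeI) (use False in auto)
  have d2: "subdegree (fps_const b * fps_X) = 1"
    by (rule subdegreeI) (use False in auto)
  have ne1: "fps_exp b - 1 \<noteq> 0" using d1 by auto
  have ne2: "fps_const b * fps_X \<noteq> 0" using d2 by auto
  have "(fps_exp b - 1) dvd (fps_const b * fps_X)"
    using fps_dvd_iff[OF ne1 ne2] d1 d2 by simp
  then show ?thesis using False
    by (simp add: bern_factor_def dvd_div_mult_self mult.commute)
qed

lemma factor:
  fixes b :: real and m :: nat
  assumes "even m" "m \<ge> 2"
  shows "(\<Sum>y<m. fps_const ((-1)^y) * fps_exp (real y * (b / m))) * bern_factor b
        = fps_const (-b/2) * fps_X * euler_factor (b/m)"
proof -
  define E where "E = fps_exp (b/m)"
  define V where "V = inverse (E + 1)"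
  have V: "(E+1) * V = 1" unfolding V_def by (rule inverse_mult_eq_1') (simp add: E_def)
  have G: "(\<Sum>y<m. fps_const ((-1)^y) * fps_exp (real y * (b / m))) = (\<Sum>y<m. (-E)^y)"
  proof (rule sum.cong)
    fix y assume "y \<in> {..<m}"
    have c: "fps_const ((-1::real)^y) = (-1)^y"
      by (metis fps_const_neg fps_const_1_eq_1 fps_const_power)
    show "fps_const ((-1)^y) * fps_exp (real y * (b / m)) = (-E)^y"
      by (simp add: c E_def fps_exp_power_mult power_minus')
  qed simp
  have geo: "(1 - (-E)) * (\<Sum>y<m. (-E)^y) = 1 - (-E)^m"
    by (simp add: one_diff_power_eq)
  have Em: "(-E)^m = fps_exp b" using assms
    by (simp add: E_def fps_exp_power_mult)
  have G2: "(\<Sum>y<m. (-E)^y) = (1 - fps_exp b) * V"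
  proof -
    have "(\<Sum>y<m. (-E)^y) = ((E+1) * V) * (\<Sum>y<m. (-E)^y)" using V by simp
    also have "\<dots> = V * ((1 + E) * (\<Sum>y<m. (-E)^y))" by (simp add: algebra_simps)
    also have "(1 + E) * (\<Sum>y<m. (-E)^y) = 1 - fps_exp b" using geo Em by simp
    also have "V * (1 - fps_exp b) = (1 - fps_exp b) * V" by (simp add: mult.commute)
    finally show ?thesis .
  qed
  have B: "(1 - fps_exp b) * bern_factor b = fps_const (-b) * fps_X"
  proof -
    have "(1 - fps_exp b) * bern_factor b = - ((fps_exp b - 1) * bern_factor b)" by (simp add: algebra_simps)
    also have "\<dots> = fps_const (-b) * fps_X" by (metis bern_mult fps_const_neg minus_mult_left)
    finally show ?thesis .
  qed
  have "(\<Sum>y<m. fps_const ((-1)^y) * fps_exp (real y * (b / m))) * bern_factor b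
        = fps_const (-b) * fps_X * V" unfolding G G2
    by (metis B mult.assoc mult.commute)
  also have "\<dots> = fps_const (-b/2) * fps_X * euler_factor (b/m)"
  proof -
    have c2: "fps_const (- b / 2) * fps_const 2 = fps_const (- b)" by (subst fps_const_mult) simp
    have e: "euler_factor (b/m) = fps_const 2 * V" by (simp add: euler_factor_alt V_def E_def)
    show ?thesis unfolding e c2[symmetric] by (simp only: ac_simps)
  qed
  finally show ?thesis .
qed

theorem mainTheorem12:
  fixes k n m :: nat and a :: "nat \<Rightarrow> real" and x :: real
  assumes "k \<ge> 1" and "n \<ge> k" and "even m" and "m \<ge> 2"
  shows "real m powi (int k - int n) * (- 1 / 2) ^ k * (fact n / fact (n - k))
           * (\<Prod>i\<in>{1..k}. a i) * euler_poly (n - k) k a (real m * x)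
         = (\<Sum>l\<in>PiE {1..k} (\<lambda>_. {0..<m}).
              (- 1) ^ (\<Sum>i\<in>{1..k}. l i)
              * norlund n k a (x + (1 / real m) * (\<Sum>i\<in>{1..k}. a i * real (l i))))"
proof -
  define P where "P = (\<Prod>j\<in>{1..k}. bern_factor (a j))"
  define Q where "Q = fps_exp (real m * x) * (\<Prod>j\<in>{1..k}. euler_factor (a j))"
  define g where "g i y = fps_const ((-1::real)^y) * fps_exp (real y * (a i / m))" for i y
  have m0: "real m \<noteq> 0" using assms by simp
  have SQ: "S (1/m) Q = fps_exp x * (\<Prod>j\<in>{1..k}. euler_factor (a j / m))"
    using m0 by (simp add: Q_def S_mult S_exp S_prod S_euler)
  have gl: "(\<Prod>i\<in>{1..k}. g i (l i)) = fps_const ((- 1) ^ (\<Sum>i\<in>{1..k}. l i))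
          * fps_exp ((1 / real m) * (\<Sum>i\<in>{1..k}. a i * real (l i)))" for l
  proof -
    have "(\<Prod>i\<in>{1..k}. g i (l i)) = (\<Prod>i\<in>{1..k}. fps_const ((-1::real)^(l i))) *
          (\<Prod>i\<in>{1..k}. fps_exp (real (l i) * (a i / m)))"
      by (simp add: g_def prod.distrib)
    also have "(\<Prod>i\<in>{1..k}. fps_const ((-1::real)^(l i))) = fps_const ((- 1) ^ (\<Sum>i\<in>{1..k}. l i))"
      by (simp add: fps_const_prod power_sum)
    also have "(\<Prod>i\<in>{1..k}. fps_exp (real (l i) * (a i / m))) = fps_exp ((1 / real m) * (\<Sum>i\<in>{1..k}. a i * real (l i)))"
      by (simp add: exp_sum[symmetric] sum_distrib_left algebra_simps)
    finally show ?thesis .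
  qed
  have sumfps: "(\<Sum>l\<in>PiE {1..k} (\<lambda>_. {0..<m}). fps_const ((- 1) ^ (\<Sum>i\<in>{1..k}. l i))
              * fps_exp (x + (1 / real m) * (\<Sum>i\<in>{1..k}. a i * real (l i))))
        = fps_exp x * (\<Prod>i\<in>{1..k}. \<Sum>y\<in>{0..<m}. g i y)"
    unfolding prod_sum_PiE[OF finite_atLeastAtMost finite_atLeastLessThan] sum_distrib_left
    by (rule sum.cong[OF refl], subst gl) (simp add: fps_exp_add_mult algebra_simps sum_divide_distrib)
  have fac: "(\<Sum>y\<in>{0..<m}. g i y) * bern_factor (a i) = fps_const (- a i / 2) * fps_X * euler_factor (a i / m)" for i
    using factor[OF assms(3,4), of "a i"] by (simp add: g_def atLeast0LessThan)
  have prodfac: "(\<Prod>i\<in>{1..k}. \<Sum>y\<in>{0..<m}. g i y) * P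
      = fps_const ((- 1 / 2) ^ k * (\<Prod>i\<in>{1..k}. a i)) * fps_X ^ k * (\<Prod>j\<in>{1..k}. euler_factor (a j / m))"
  proof -
    have "(\<Prod>i\<in>{1..k}. \<Sum>y\<in>{0..<m}. g i y) * P = (\<Prod>i\<in>{1..k}. (\<Sum>y\<in>{0..<m}. g i y) * bern_factor (a i))"
      by (simp add: P_def prod.distrib)
    also have "\<dots> = (\<Prod>i\<in>{1..k}. fps_const (- a i / 2) * fps_X * euler_factor (a i / m))"
      by (simp add: fac)
    also have "\<dots> = fps_const ((- 1 / 2) ^ k * (\<Prod>i\<in>{1..k}. a i)) * fps_X ^ k * (\<Prod>j\<in>{1..k}. euler_factor (a j / m))"
    proof -
      have r: "(\<Prod>i\<in>{1..k}. - a i / 2) = (- 1 / 2) ^ k * (\<Prod>i\<in>{1..k}. a i)"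
      proof -
        have "(\<Prod>i\<in>{1..k}. - a i / 2) = (\<Prod>i\<in>{1..k}. (- 1 / 2) * a i)" by simp
        also have "\<dots> = (- 1 / 2) ^ k * (\<Prod>i\<in>{1..k}. a i)" by (simp only: prod.distrib prod_constant card_atLeastAtMost) simp
        finally show ?thesis .
      qed
      have "(\<Prod>i\<in>{1..k}. fps_const (- a i / 2) * fps_X * euler_factor (a i / m))
          = (\<Prod>i\<in>{1..k}. fps_const (- a i / 2)) * (\<Prod>i\<in>{1..k}. fps_X) * (\<Prod>i\<in>{1..k}. euler_factor (a i / m))"
        by (simp only: prod.distrib)
      also have "(\<Prod>i\<in>{1..k}. fps_const (- a i / 2)) = fps_const ((- 1 / 2) ^ k * (\<Prod>i\<in>{1..k}. a i))"
        by (simp only: fps_const_prod[symmetric] r)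
      also have "(\<Prod>i\<in>{1..k}. (fps_X::real fps)) = fps_X ^ k" by simp
      finally show ?thesis .
    qed
    finally show ?thesis .
  qed
  have RHS: "(\<Sum>l\<in>PiE {1..k} (\<lambda>_. {0..<m}).
              (- 1) ^ (\<Sum>i\<in>{1..k}. l i)
              * norlund n k a (x + (1 / real m) * (\<Sum>i\<in>{1..k}. a i * real (l i))))
      = fact n * ((\<Sum>l\<in>PiE {1..k} (\<lambda>_. {0..<m}). fps_const ((- 1) ^ (\<Sum>i\<in>{1..k}. l i))
              * fps_exp (x + (1 / real m) * (\<Sum>i\<in>{1..k}. a i * real (l i)))) * P) $ n"
    unfolding norlund_def P_def sum_distrib_right fps_sum_nth sum_distrib_left
    by (rule sum.cong[OF refl]) (simp add: mult.assoc mult.left_commute)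
  also have "\<dots> = fact n * (fps_const ((- 1 / 2) ^ k * (\<Prod>i\<in>{1..k}. a i)) * (fps_X ^ k * S (1/m) Q)) $ n"
    by (simp only: sumfps mult.assoc prodfac[unfolded mult.assoc] SQ) (simp only: ac_simps)
  also have "\<dots> = fact n * ((- 1 / 2) ^ k * (\<Prod>i\<in>{1..k}. a i)) * ((1/m)^(n-k) * Q $ (n-k))"
    using assms(2) by (simp add: fps_X_power_mult_nth)
  finally have R: "(\<Sum>l\<in>PiE {1..k} (\<lambda>_. {0..<m}).
              (- 1) ^ (\<Sum>i\<in>{1..k}. l i)
              * norlund n k a (x + (1 / real m) * (\<Sum>i\<in>{1..k}. a i * real (l i))))
      = fact n * ((- 1 / 2) ^ k * (\<Prod>i\<in>{1..k}. a i)) * ((1/m)^(n-k) * Q $ (n-k))" .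
  have pw: "real m powi (int k - int n) = (1/m)^(n-k)"
  proof -
    have e: "int k - int n = - int (n-k)" using assms(2) by simp
    have "real m powi (- int (n-k)) = inverse (real m ^ (n-k))" by (simp only: power_int_minus power_int_of_nat)
    also have "\<dots> = (1/m)^(n-k)" by (simp add: power_one_over inverse_eq_divide)
    finally show ?thesis unfolding e .
  qed
  have ff: "fact (n-k) \<noteq> (0::real)" by simp
  show ?thesis unfolding R pw euler_poly_def Q_def[symmetric]
  proof -
    have h: "fact n / fact (n-k) * fact (n-k) = (fact n::real)" using ff by simp
    have "(1 / real m) ^ (n - k) * (- 1 / 2) ^ k * (fact n / fact (n - k)) * prod a {1..k} * (fact (n - k) * Q $ (n - k)) =
      ((1 / real m) ^ (n - k) * (- 1 / 2) ^ k * prod a {1..k} * Q $ (n - k)) * (fact n / fact (n-k) * fact (n-k))"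
      by (simp only: ac_simps)
    also have "\<dots> = ((1 / real m) ^ (n - k) * (- 1 / 2) ^ k * prod a {1..k} * Q $ (n - k)) * fact n"
      by (simp only: h)
    also have "\<dots> = fact n * ((- 1 / 2) ^ k * prod a {1..k}) * ((1 / real m) ^ (n - k) * Q $ (n - k))"
      by (simp only: ac_simps)
    finally show "(1 / real m) ^ (n - k) * (- 1 / 2) ^ k * (fact n / fact (n - k)) * prod a {1..k} * (fact (n - k) * Q $ (n - k)) =
    fact n * ((- 1 / 2) ^ k * prod a {1..k}) * ((1 / real m) ^ (n - k) * Q $ (n - k))" .
  qed
qed
end
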